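(* Let $(I,\preceq)$ be a finite poset with $|I|=n$, for each $i\in I$ let $X_i$ be a finite set with $|X_i|\ge 2$, let $\{p_i^0\}_{i\in I}$ be a strict probability measure on $I$, and let $\mathcal{P}$ be the generalized crested product defined by $(I,\preceq)$ and $\{p_i^0\}$ in which every factor chain is the uniform chain $U_i$ on $X_i$. Let $R\subseteq I$ and let $\widetilde{\mathcal{P}}$ be the lumped chain of $\mathcal{P}$ with respect to the partition of $X=\prod_{i\in I}X_i$ into classes of the relation $x\sim y\iff x_i=y_i$ for all $i\in I\setminus R$ (this chain is lumpable with respect to that partition); identify each class with the common value $(x_i)_{i\in I\setminus R}\in\prod_{i\in I\setminus R}X_i$. Then $$\widetilde{\mathcal{P}}=\sum_{i\in I}p_i^0\left(\bigotimes_{j\in H[i]\setminus R}U_j\right)\otimes\left(\bigotimes_{j\notin (H[i]\cup R)}I_j\right),$$ i.e. for $u,v\in\prod_{j\in I\setminus R}X_j$, $\widetilde{p}(u,v)=\sum_{i\in I}p_i^0\prod_{j\in H[i]\setminus R}\frac{1}{|X_j|}\prod_{j\in I\setminus (H[i]\cup R)}\delta(u_j,v_j)$.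
   Context: $H(i)=\{j\in I: j\prec i\}$, $H[i]=H(i)\sqcup\{i\}$. $U_j$ is the uniform Markov operator on $X_j$ (all matrix entries $1/|X_j|$), $I_j$ the identity operator on $X_j$, and $\delta$ the Kronecker delta. The generalized crested product with uniform factors is the Markov chain on $X$ with transition probabilities $p(x,y)=\sum_{i\in I}p_i^0\prod_{j\in H[i]}\frac{1}{|X_j|}\prod_{j\notin H[i]}\delta(x_j,y_j)$, i.e. operator $\sum_{i}p_i^0(\bigotimes_{j\in H[i]}U_j)\otimes(\bigotimes_{j\notin H[i]}I_j)$. If a chain $p$ is lumpable w.r.t. a partition $\mathcal{L}$ (i.e. $x\mapsto\sum_{y\in L'}p(x,y)$ is constant on each part $L$ for every part $L'$), the lumped chain on $\mathcal{L}$ has transition probabilities $\widetilde p(L,L')=\sum_{y\in L'}p(x,y)$ for any $x\in L$. *)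

theory Defs
  imports Complex_Main "HOL-Library.FuncSet"
begin

definition poset_on :: "'i set \<Rightarrow> ('i \<Rightarrow> 'i \<Rightarrow> bool) \<Rightarrow> bool" where
  "poset_on I le \<longleftrightarrow>
     (\<forall>i\<in>I. le i i) \<and>
     (\<forall>i\<in>I. \<forall>j\<in>I. le i j \<and> le j i \<longrightarrow> i = j) \<and>
     (\<forall>i\<in>I. \<forall>j\<in>I. \<forall>k\<in>I. le i j \<and> le j k \<longrightarrow> le i k)"

definition Hopen :: "'i set \<Rightarrow> ('i \<Rightarrow> 'i \<Rightarrow> bool) \<Rightarrow> 'i \<Rightarrow> 'i set" where
  "Hopen I le i = {j\<in>I. le j i \<and> j \<noteq> i}"

definition Hclosed :: "'i set \<Rightarrow> ('i \<Rightarrow> 'i \<Rightarrow> bool) \<Rightarrow> 'i \<Rightarrow> 'i set" where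
  "Hclosed I le i = Hopen I le i \<union> {i}"

definition kdelta :: "'a \<Rightarrow> 'a \<Rightarrow> real" where
  "kdelta a b = (if a = b then 1 else 0)"

text \<open>Generalized crested product with uniform factors U_i on X_i; states are
  elements of PiE I X (functions on I, undefined outside).\<close>
definition crested_uniform ::
  "'i set \<Rightarrow> ('i \<Rightarrow> 'i \<Rightarrow> bool) \<Rightarrow> ('i \<Rightarrow> 'a set) \<Rightarrow> ('i \<Rightarrow> real)
     \<Rightarrow> ('i \<Rightarrow> 'a) \<Rightarrow> ('i \<Rightarrow> 'a) \<Rightarrow> real" where
  "crested_uniform I le X p0 x y =
     (\<Sum>i\<in>I. p0 i * (\<Prod>j\<in>Hclosed I le i. 1 / real (card (X j)))
                 * (\<Prod>j\<in>I - Hclosed I le i. kdelta (x j) (y j)))"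

definition lumpable :: "'s set \<Rightarrow> ('s \<Rightarrow> 's \<Rightarrow> real) \<Rightarrow> 's set set \<Rightarrow> bool" where
  "lumpable S p Ls \<longleftrightarrow>
     (\<forall>L\<in>Ls. \<forall>L'\<in>Ls. \<forall>x\<in>L. \<forall>x'\<in>L. (\<Sum>y\<in>L'. p x y) = (\<Sum>y\<in>L'. p x' y))"

definition lumped :: "('s \<Rightarrow> 's \<Rightarrow> real) \<Rightarrow> 's set \<Rightarrow> 's set \<Rightarrow> real" where
  "lumped p L L' = (\<Sum>y\<in>L'. p (SOME x. x \<in> L) y)"

definition agree_off :: "('i \<Rightarrow> 'a) set \<Rightarrow> 'i set \<Rightarrow> 'i set \<Rightarrow> (('i \<Rightarrow> 'a) \<times> ('i \<Rightarrow> 'a)) set" where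
  "agree_off S I R = {(x, y). x \<in> S \<and> y \<in> S \<and> (\<forall>i\<in>I - R. x i = y i)}"

definition class_of :: "('i \<Rightarrow> 'a) set \<Rightarrow> 'i set \<Rightarrow> ('i \<Rightarrow> 'a) \<Rightarrow> ('i \<Rightarrow> 'a) set" where
  "class_of S J u = {x\<in>S. \<forall>j\<in>J. x j = u j}"

end

theory Submission
  imports Defs
begin

lemma class_eq:
  assumes "R \<subseteq> I" "w \<in> PiE (I - R) X"
  shows "class_of (PiE I X) (I - R) w = PiE I (\<lambda>j. if j \<in> I - R then {w j} else X j)"
  using assms unfolding class_of_def PiE_def Pi_def extensional_def by auto

lemma prod_ind:
  assumes "finite I" "H \<subseteq> I"
  shows "(\<Prod>j\<in>H. f j) = (\<Prod>j\<in>I. if j \<in> H then f j else 1)"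
proof -
  have "H = {j\<in>I. j \<in> H}" using assms by auto
  then show ?thesis using prod.inter_filter[OF assms(1), of f "\<lambda>j. j \<in> H"] by simp
qed

lemma key:
  assumes fin: "finite I" and XX: "\<forall>i\<in>I. finite (X i) \<and> card (X i) \<ge> 2"
    and R: "R \<subseteq> I" and x: "x \<in> PiE I X" and w: "w \<in> PiE (I - R) X"
  shows "(\<Sum>y\<in>class_of (PiE I X) (I - R) w. crested_uniform I le X p0 x y)
     = (\<Sum>i\<in>I. p0 i * (\<Prod>j\<in>Hclosed I le i - R. 1 / real (card (X j)))
                 * (\<Prod>j\<in>I - (Hclosed I le i \<union> R). kdelta (x j) (w j)))"
proof -
  define X' where "X' = (\<lambda>j. if j \<in> I - R then {w j} else X j)"
  have C: "class_of (PiE I X) (I - R) w = PiE I X'"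
    unfolding X'_def using class_eq[OF R w] .
  have finX': "\<And>j. j \<in> I \<Longrightarrow> finite (X' j)" using XX unfolding X'_def by auto
  have finC: "finite (PiE I X')" using fin finX' by (simp add: finite_PiE)
  have inner: "(\<Sum>y\<in>PiE I X'. \<Prod>j\<in>I - Hclosed I le i. kdelta (x j) (y j))
      = (\<Prod>j\<in>I. if j \<in> I - R then (if j \<in> Hclosed I le i then 1 else kdelta (x j) (w j))
                 else (if j \<in> Hclosed I le i then real (card (X j)) else 1))" for i
  proof -
    define g where "g j a = (if j \<in> Hclosed I le i then 1 else kdelta (x j) a)" for j a
    have "(\<Sum>y\<in>PiE I X'. \<Prod>j\<in>I - Hclosed I le i. kdelta (x j) (y j))
        = (\<Sum>y\<in>PiE I X'. \<Prod>j\<in>I. g j (y j))"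
    proof (rule sum.cong[OF refl])
      fix y
      have "(\<Prod>j\<in>I - Hclosed I le i. kdelta (x j) (y j))
          = (\<Prod>j\<in>I. if j \<in> I - Hclosed I le i then kdelta (x j) (y j) else 1)"
        by (rule prod_ind[OF fin]) auto
      also have "\<dots> = (\<Prod>j\<in>I. g j (y j))"
        by (rule prod.cong) (auto simp: g_def)
      finally show "(\<Prod>j\<in>I - Hclosed I le i. kdelta (x j) (y j)) = (\<Prod>j\<in>I. g j (y j))" .
    qed
    also have "\<dots> = (\<Prod>j\<in>I. \<Sum>a\<in>X' j. g j a)"
      using prod_sum_PiE[OF fin finX', where f=g] by simp
    also have "\<dots> = (\<Prod>j\<in>I. if j \<in> I - R then (if j \<in> Hclosed I le i then 1 else kdelta (x j) (w j))
                 else (if j \<in> Hclosed I le i then real (card (X j)) else 1))"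
    proof (rule prod.cong[OF refl])
      fix j assume j: "j \<in> I"
      show "(\<Sum>a\<in>X' j. g j a) = (if j \<in> I - R then (if j \<in> Hclosed I le i then 1 else kdelta (x j) (w j))
                 else (if j \<in> Hclosed I le i then real (card (X j)) else 1))"
      proof (cases "j \<in> I - R")
        case True then show ?thesis by (simp add: X'_def g_def)
      next
        case False
        have xj: "x j \<in> X j" using x j by auto
        have fj: "finite (X j)" using XX j by auto
        have "(\<Sum>a\<in>X j. kdelta (x j) a) = 1"
          unfolding kdelta_def using xj fj by (simp add: sum.delta)
        then show ?thesis using False j by (simp add: X'_def g_def)
      qed
    qed
    finally show ?thesis .
  qed
  have step: "p0 i * (\<Prod>j\<in>Hclosed I le i. 1 / real (card (X j))) *
      (\<Sum>y\<in>PiE I X'. \<Prod>j\<in>I - Hclosed I le i. kdelta (x j) (y j))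
    = p0 i * (\<Prod>j\<in>Hclosed I le i - R. 1 / real (card (X j)))
                 * (\<Prod>j\<in>I - (Hclosed I le i \<union> R). kdelta (x j) (w j))" if i: "i \<in> I" for i
  proof -
    let ?H = "Hclosed I le i"
    have HI: "?H \<subseteq> I" using i unfolding Hclosed_def Hopen_def by auto
    have "(\<Prod>j\<in>?H. 1 / real (card (X j))) *
      (\<Prod>j\<in>I. if j \<in> I - R then (if j \<in> ?H then 1 else kdelta (x j) (w j))
                 else (if j \<in> ?H then real (card (X j)) else 1))
      = (\<Prod>j\<in>I. (if j \<in> ?H then 1 / real (card (X j)) else 1) *
           (if j \<in> I - R then (if j \<in> ?H then 1 else kdelta (x j) (w j))
                 else (if j \<in> ?H then real (card (X j)) else 1)))"
      by (simp add: prod.distrib prod_ind[OF fin HI])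
    also have "\<dots> = (\<Prod>j\<in>I. (if j \<in> ?H - R then 1 / real (card (X j)) else 1) *
           (if j \<in> I - (?H \<union> R) then kdelta (x j) (w j) else 1))"
    proof (rule prod.cong[OF refl])
      fix j assume j: "j \<in> I"
      have "real (card (X j)) \<noteq> 0" using XX j by auto
      then show "(if j \<in> ?H then 1 / real (card (X j)) else 1) *
           (if j \<in> I - R then (if j \<in> ?H then 1 else kdelta (x j) (w j))
                 else (if j \<in> ?H then real (card (X j)) else 1)) =
          (if j \<in> ?H - R then 1 / real (card (X j)) else 1) *
           (if j \<in> I - (?H \<union> R) then kdelta (x j) (w j) else 1)"
        using j by auto
    qed
    also have "\<dots> = (\<Prod>j\<in>?H - R. 1 / real (card (X j))) *
        (\<Prod>j\<in>I - (?H \<union> R). kdelta (x j) (w j))"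
      by (simp add: prod.distrib prod_ind[OF fin, of "?H - R"] prod_ind[OF fin, of "I - (?H \<union> R)"] HI
          Diff_subset[THEN subset_trans])
    finally show ?thesis using inner[of i] by (simp add: mult.assoc)
  qed
  have "(\<Sum>y\<in>PiE I X'. crested_uniform I le X p0 x y)
      = (\<Sum>i\<in>I. p0 i * (\<Prod>j\<in>Hclosed I le i. 1 / real (card (X j))) *
      (\<Sum>y\<in>PiE I X'. \<Prod>j\<in>I - Hclosed I le i. kdelta (x j) (y j)))"
    unfolding crested_uniform_def
    by (subst sum.swap) (simp add: sum_distrib_left)
  also have "\<dots> = (\<Sum>i\<in>I. p0 i * (\<Prod>j\<in>Hclosed I le i - R. 1 / real (card (X j)))
                 * (\<Prod>j\<in>I - (Hclosed I le i \<union> R). kdelta (x j) (w j)))"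
    by (rule sum.cong[OF refl]) (rule step)
  finally show ?thesis using C by simp
qed

lemma class_nonempty:
  assumes XX: "\<forall>i\<in>I. finite (X i) \<and> card (X i) \<ge> 2" and R: "R \<subseteq> I"
    and w: "w \<in> PiE (I - R) X"
  shows "\<exists>x. x \<in> class_of (PiE I X) (I - R) w"
proof -
  have ne: "\<And>j. j \<in> I \<Longrightarrow> X j \<noteq> {}" using XX by fastforce
  define x where "x = (\<lambda>j. if j \<in> I - R then w j else if j \<in> I then (SOME a. a \<in> X j) else undefined)"
  have "x \<in> PiE I X" using w ne unfolding x_def PiE_def Pi_def extensional_def
    by (auto intro: some_in_eq[THEN iffD2])
  then show ?thesis unfolding class_of_def x_def by auto
qed

theorem proposition4:
  fixes I :: "'i set" and le :: "'i \<Rightarrow> 'i \<Rightarrow> bool"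
    and X :: "'i \<Rightarrow> 'a set" and p0 :: "'i \<Rightarrow> real" and R :: "'i set"
  assumes "finite I" and "poset_on I le"
    and "\<forall>i\<in>I. finite (X i) \<and> card (X i) \<ge> 2"
    and "\<forall>i\<in>I. p0 i > 0" and "(\<Sum>i\<in>I. p0 i) = 1"
    and "R \<subseteq> I"
  shows "lumpable (PiE I X) (crested_uniform I le X p0)
           (PiE I X // agree_off (PiE I X) I R)
       \<and> (PiE I X // agree_off (PiE I X) I R)
           = (class_of (PiE I X) (I - R)) ` PiE (I - R) X
       \<and> (\<forall>u\<in>PiE (I - R) X. \<forall>v\<in>PiE (I - R) X.
            lumped (crested_uniform I le X p0)
              (class_of (PiE I X) (I - R) u) (class_of (PiE I X) (I - R) v)
            = (\<Sum>i\<in>I. p0 i * (\<Prod>j\<in>Hclosed I le i - R. 1 / real (card (X j)))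
                 * (\<Prod>j\<in>I - (Hclosed I le i \<union> R). kdelta (u j) (v j))))"
proof -
  note fin = assms(1) and XX = assms(3) and R = assms(6)
  let ?S = "PiE I X" and ?C = "class_of (PiE I X) (I - R)"
  have img: "agree_off ?S I R `` {x} = ?C (restrict x (I - R))" if "x \<in> ?S" for x
    using that unfolding agree_off_def class_of_def by auto
  have rin: "restrict x (I - R) \<in> PiE (I - R) X" if "x \<in> ?S" for x
    using that by auto
  have Q: "?S // agree_off ?S I R = ?C ` PiE (I - R) X"
  proof
    show "?S // agree_off ?S I R \<subseteq> ?C ` PiE (I - R) X"
      unfolding quotient_def using img rin by blast
  next
    show "?C ` PiE (I - R) X \<subseteq> ?S // agree_off ?S I R"
    proof
      fix L assume "L \<in> ?C ` PiE (I - R) X"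
      then obtain w where w: "w \<in> PiE (I - R) X" and L: "L = ?C w" by blast
      obtain x where x: "x \<in> ?C w" using class_nonempty[OF XX R w] by blast
      have xS: "x \<in> ?S" using x unfolding class_of_def by auto
      have "restrict x (I - R) = w" using x w unfolding class_of_def PiE_def extensional_def
        by (auto simp: restrict_def)
      then have "L = agree_off ?S I R `` {x}" using img[OF xS] L by simp
      then show "L \<in> ?S // agree_off ?S I R" using xS unfolding quotient_def by blast
    qed
  qed
  have agree: "(\<Sum>i\<in>I. p0 i * (\<Prod>j\<in>Hclosed I le i - R. 1 / real (card (X j)))
                 * (\<Prod>j\<in>I - (Hclosed I le i \<union> R). kdelta (x j) (w j)))
      = (\<Sum>i\<in>I. p0 i * (\<Prod>j\<in>Hclosed I le i - R. 1 / real (card (X j)))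
                 * (\<Prod>j\<in>I - (Hclosed I le i \<union> R). kdelta (u j) (w j)))"
    if "\<forall>j\<in>I - R. x j = u j" for x u w
    using that by (intro sum.cong refl arg_cong2[where f="(*)"] prod.cong) auto
  have L: "lumpable ?S (crested_uniform I le X p0) (?S // agree_off ?S I R)"
    unfolding lumpable_def Q
  proof (intro ballI)
    fix L L' x x'
    assume "L \<in> ?C ` PiE (I - R) X" "L' \<in> ?C ` PiE (I - R) X" "x \<in> L" "x' \<in> L"
    then obtain u w where u: "u \<in> PiE (I - R) X" "L = ?C u" and w: "w \<in> PiE (I - R) X" "L' = ?C w"
      and x: "x \<in> ?C u" and x': "x' \<in> ?C u" by blast
    have xS: "x \<in> ?S" "x' \<in> ?S" using x x' unfolding class_of_def by auto
    have e: "\<forall>j\<in>I - R. x j = u j" "\<forall>j\<in>I - R. x' j = u j" using x x' unfolding class_of_def by auto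
    show "(\<Sum>y\<in>L'. crested_uniform I le X p0 x y) = (\<Sum>y\<in>L'. crested_uniform I le X p0 x' y)"
      unfolding w(2) key[OF fin XX R xS(1) w(1)] key[OF fin XX R xS(2) w(1)]
      using agree[OF e(1)] agree[OF e(2)] by simp
  qed
  have M: "lumped (crested_uniform I le X p0) (?C u) (?C v)
      = (\<Sum>i\<in>I. p0 i * (\<Prod>j\<in>Hclosed I le i - R. 1 / real (card (X j)))
                 * (\<Prod>j\<in>I - (Hclosed I le i \<union> R). kdelta (u j) (v j)))"
    if u: "u \<in> PiE (I - R) X" and v: "v \<in> PiE (I - R) X" for u v
  proof -
    define x where "x = (SOME x. x \<in> ?C u)"
    have x: "x \<in> ?C u" unfolding x_def using class_nonempty[OF XX R u] by (rule someI_ex)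
    have xS: "x \<in> ?S" using x unfolding class_of_def by auto
    have e: "\<forall>j\<in>I - R. x j = u j" using x unfolding class_of_def by auto
    show ?thesis unfolding lumped_def x_def[symmetric] key[OF fin XX R xS v]
      using agree[OF e] by simp
  qed
  show ?thesis using L Q M by blast
qed

end
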